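(* Let $H$ be a real, separable, infinite-dimensional Hilbert space and $|\cdot|$ a measurable norm on $H$. Let $K$ be a closed convex subset of $H$ and $p\in H$ a point outside $K$. Then there is a measurably adapted sequence of finite-dimensional subspaces $F_1\subset F_2\subset\cdots\subset H$ with $p\in F_1$ such that $(p+F_n^\perp)\cap K=\emptyset$ for each $n\geq1$. Moreover, $p\notin\mathrm{pr}_{F_n}(K)$ for all $n\ge1$, where $\mathrm{pr}_{F_n}$ is the orthogonal projection of $H$ onto $F_n$.
   Context: A norm $|\cdot|$ on $H$ is a measurable norm if for every $\epsilon>0$ there is a finite-dimensional subspace $F_0\subset H$ such that $\mathrm{Gauss}[v\in F_1: |v|>\epsilon]<\epsilon$ for every finite-dimensional subspace $F_1\subset H$ orthogonal to $F_0$ ($\mathrm{Gauss}$ = standard Gaussian measure on $F_1$). A sequence $(F_n)_{n\geq1}$ of closed subspaces of $H$ is measurably adapted if: (i) $F_1\subset F_2\subset\cdots$; (ii) $1\leq\dim(F_{n+1}\cap F_n^\perp)<\infty$ for all $n$; (iii) $\bigcup_n F_n$ is dense in $H$; (iv) $\mathrm{Gauss}[v\in F_{n+1}\cap F_n^\perp: |v|>2^{-n}]<2^{-n}$ for every $n\ge1$. *)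

theory Defs
  imports "HOL-Analysis.Analysis" "HOL-Probability.Probability"
begin

text \<open>A (not necessarily continuous) norm on a real vector space.\<close>
definition is_norm :: "('a::real_vector \<Rightarrow> real) \<Rightarrow> bool" where
  "is_norm N \<longleftrightarrow> (\<forall>x. 0 \<le> N x) \<and> (\<forall>x. N x = 0 \<longleftrightarrow> x = 0)
     \<and> (\<forall>c x. N (c *\<^sub>R x) = \<bar>c\<bar> * N x) \<and> (\<forall>x y. N (x + y) \<le> N x + N y)"

definition fin_dim_subspace :: "'a::real_vector set \<Rightarrow> bool" where
  "fin_dim_subspace G \<longleftrightarrow> (\<exists>B. finite B \<and> span B = G)"

definition is_onb :: "'a::real_inner set \<Rightarrow> nat \<Rightarrow> (nat \<Rightarrow> 'a) \<Rightarrow> bool" where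
  "is_onb G d b \<longleftrightarrow> (\<forall>i<d. \<forall>j<d. b i \<bullet> b j = (if i = j then 1 else 0))
      \<and> span (b ` {..<d}) = G"

text \<open>Standard Gaussian measure on a finite-dimensional subspace G, evaluated on the set
  of points satisfying P: the law of \<open>\<Sum>i<d. g i *\<^sub>R b i\<close> with \<open>g i\<close> i.i.d. N(0,1)
  and \<open>b\<close> an orthonormal basis of G (the result does not depend on the chosen basis).\<close>
definition gauss :: "'a::real_inner set \<Rightarrow> ('a \<Rightarrow> bool) \<Rightarrow> real" where
  "gauss G P = (let (d, b) = (SOME (d, b). is_onb G d b) in
     measure (PiM {..<d} (\<lambda>_. density lborel (normal_density 0 1)))
       {g \<in> space (PiM {..<d} (\<lambda>_. density lborel (normal_density 0 1))).
          P (\<Sum>i<d. g i *\<^sub>R b i)})"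

definition measurable_norm :: "('a::real_inner \<Rightarrow> real) \<Rightarrow> bool" where
  "measurable_norm N \<longleftrightarrow> is_norm N \<and>
     (\<forall>\<epsilon>>0. \<exists>F0. fin_dim_subspace F0 \<and>
        (\<forall>F1. fin_dim_subspace F1 \<and> F1 \<subseteq> orthogonal_comp F0 \<longrightarrow>
           gauss F1 (\<lambda>v. N v > \<epsilon>) < \<epsilon>))"

text \<open>Measurably adapted sequence, indexed from 1 (the value at 0 is irrelevant).\<close>
definition measurably_adapted :: "('a::real_inner \<Rightarrow> real) \<Rightarrow> (nat \<Rightarrow> 'a set) \<Rightarrow> bool" where
  "measurably_adapted N F \<longleftrightarrow>
     (\<forall>n\<ge>1. subspace (F n) \<and> closed (F n)) \<and>
     (\<forall>n\<ge>1. F n \<subseteq> F (Suc n)) \<and>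
     (\<forall>n\<ge>1. F (Suc n) \<inter> orthogonal_comp (F n) \<noteq> {0} \<and>
             fin_dim_subspace (F (Suc n) \<inter> orthogonal_comp (F n))) \<and>
     closure (\<Union>n\<in>{1..}. F n) = UNIV \<and>
     (\<forall>n\<ge>1. gauss (F (Suc n) \<inter> orthogonal_comp (F n)) (\<lambda>v. N v > (1/2)^n) < (1/2)^n)"

text \<open>Orthogonal projection onto a (finite-dimensional, hence closed) subspace F.\<close>
definition orth_proj :: "'a::real_inner set \<Rightarrow> 'a \<Rightarrow> 'a" where
  "orth_proj F x = (THE y. y \<in> F \<and> x - y \<in> orthogonal_comp F)"

end

theory Submission
  imports Defs
begin

definition prj :: "'a::real_inner set \<Rightarrow> 'a \<Rightarrow> 'a" where
  "prj C x = (\<Sum>b\<in>C. (b \<bullet> x / (b \<bullet> b)) *\<^sub>R b)"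

lemma prj_in_span: "prj C x \<in> span C"
  unfolding prj_def by (intro span_sum span_mul span_base) 

lemma prj_orth:
  fixes C :: "'a::real_inner set"
  assumes S: "pairwise orthogonal C" and fin: "finite C" and y: "y \<in> span C"
  shows "orthogonal y (x - prj C x)"
proof -
  have "orthogonal (x - prj C x) z" if "z \<in> C" for z
  proof -
    have "x \<bullet> z = (\<Sum>y\<in>C. if y = z then y \<bullet> x else 0)"
      by (simp add: fin inner_commute that)
    also have "\<dots> =  (\<Sum>b\<in>C. b \<bullet> x * (b \<bullet> z) / (b \<bullet> b))"
      apply (rule sum.cong [OF refl], simp)
      by (meson S orthogonal_def pairwise_def that)
    finally show ?thesis
      by (simp add: prj_def orthogonal_def algebra_simps inner_sum_left)
  qed
  then show ?thesis
    using orthogonal_to_span orthogonal_commute y by blast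
qed

lemma prj_id:
  fixes C :: "'a::real_inner set"
  assumes S: "pairwise orthogonal C" and fin: "finite C" and x: "x \<in> span C"
  shows "prj C x = x"
proof -
  have "x - prj C x \<in> span C" using x prj_in_span span_diff by blast
  then have "orthogonal (x - prj C x) (x - prj C x)" using prj_orth[OF S fin] by blast
  then show ?thesis by (simp add: orthogonal_self)
qed

lemma prj_linear: "linear (prj C)"
  unfolding prj_def
  by (auto simp: linear_iff inner_add_right scaleR_add_left add_divide_distrib sum.distrib
       scaleR_sum_right sum_distrib_left)

lemma prj_cont: "continuous_on UNIV (prj C)"
  unfolding prj_def divide_inverse by (intro continuous_intros)

lemma span_closed:
  fixes C :: "'a::real_inner set"
  assumes S: "pairwise orthogonal C" and fin: "finite C"
  shows "closed (span C)"
proof -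
  have "span C = {x. prj C x = x}"
  proof (intro set_eqI)
    fix x show "x \<in> span C \<longleftrightarrow> x \<in> {x. prj C x = x}"
    proof
      assume "x \<in> span C" then show "x \<in> {x. prj C x = x}" using prj_id[OF S fin, of x] by simp
    next
      assume "x \<in> {x. prj C x = x}" then have "x = prj C x" by simp
      then show "x \<in> span C" using prj_in_span[of C x] by simp
    qed
  qed
  moreover have "closed {x. prj C x = x}" by (rule closed_Collect_eq[OF prj_cont continuous_on_id])
  ultimately show ?thesis by simp
qed

lemma parallelogram:
  fixes a b :: "'a::real_inner"
  shows "norm (a - b)^2 + norm (a + b)^2 = 2 * norm a ^2 + 2 * norm b ^2"
  by (simp add: power2_norm_eq_inner inner_add_left inner_add_right inner_diff_left inner_diff_right inner_commute)

lemma norm_expand: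
  fixes x y :: "'a::real_inner"
  shows "norm (x - t *\<^sub>R y)^2 = norm x ^2 - 2 * t * (x \<bullet> y) + t^2 * norm y ^2"
  unfolding power2_norm_eq_inner
  by (simp add: inner_diff_left inner_diff_right inner_commute power2_eq_square algebra_simps)

lemma nearest_point:
  fixes K :: "'a::{real_inner,complete_space} set"
  assumes cl: "closed K" and cv: "convex K" and ne: "K \<noteq> {}"
  shows "\<exists>q\<in>K. \<forall>k\<in>K. norm (p - q)^2 \<le> norm (p - k)^2"
proof -
  define f where "f k = norm (p - k)^2" for k
  define d where "d = Inf (f ` K)"
  have bdd: "bdd_below (f ` K)" unfolding f_def by (rule bdd_belowI[of _ 0]) auto
  have low: "d \<le> f k" if "k \<in> K" for k
    unfolding d_def using bdd that by (simp add: cInf_lower)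
  have "\<exists>k\<in>K. f k < d + inverse (real (Suc n))" for n
  proof -
    have "Inf (f ` K) < d + inverse (real (Suc n))" unfolding d_def by simp
    then show ?thesis using cInf_lessD[of "f ` K"] ne by blast
  qed
  then obtain kk where kk: "\<And>n. kk n \<in> K" "\<And>n. f (kk n) < d + inverse (real (Suc n))"
    by metis
  have key: "dist (kk m) (kk n) ^2 \<le> 2 * inverse (real (Suc m)) + 2 * inverse (real (Suc n))" for m n
  proof -
    define mid where "mid = (1/2) *\<^sub>R kk m + (1/2) *\<^sub>R kk n"
    have "mid \<in> K" unfolding mid_def using cv kk(1) unfolding convex_def by auto
    then have "d \<le> f mid" by (rule low)
    have e1: "(p - kk m) + (p - kk n) = 2 *\<^sub>R (p - mid)"
      unfolding mid_def by (simp add: algebra_simps scaleR_2)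
    have "norm ((p - kk m) + (p - kk n))^2 = 4 * f mid"
      unfolding e1 f_def by (simp add: power_mult_distrib)
    moreover have "norm (kk n - kk m)^2 = norm ((p - kk m) - (p - kk n))^2" by simp
    moreover note parallelogram[of "p - kk m" "p - kk n"]
    ultimately have "norm (kk n - kk m)^2 = 2 * f (kk m) + 2 * f (kk n) - 4 * f mid"
      unfolding f_def by linarith
    then show ?thesis using kk(2)[of m] kk(2)[of n] \<open>d \<le> f mid\<close>
      by (simp add: dist_norm norm_minus_commute)
  qed
  have "Cauchy kk"
  proof (rule metric_CauchyI)
    fix e :: real assume "e > 0"
    then have "e^2 > 0" by simp
    then obtain M where M: "inverse (real (Suc M)) < e^2 / 4"
      using reals_Archimedean[of "e^2/4"] by auto
    show "\<exists>M. \<forall>m\<ge>M. \<forall>n\<ge>M. dist (kk m) (kk n) < e"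
    proof (intro exI allI impI)
      fix m n assume "m \<ge> M" "n \<ge> M"
      then have "inverse (real (Suc m)) \<le> inverse (real (Suc M))"
                "inverse (real (Suc n)) \<le> inverse (real (Suc M))"
        by (auto simp: field_simps)
      then have "dist (kk m) (kk n) ^2 < e^2" using key[of m n] M by linarith
      then show "dist (kk m) (kk n) < e" using \<open>e > 0\<close>
        by (meson abs_le_square_iff abs_of_nonneg less_le_not_le linorder_not_le zero_le_dist power2_less_imp_less)
    qed
  qed
  then obtain q where q: "kk \<longlonglongrightarrow> q" using Cauchy_convergent_iff convergent_def by blast
  have qK: "q \<in> K" using cl closed_sequentially kk(1) q by blast
  have "f q \<le> f k" if "k \<in> K" for k
  proof -
    have "(\<lambda>n. f (kk n)) \<longlonglongrightarrow> f q" unfolding f_def by (intro tendsto_intros q)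
    moreover have "(\<lambda>n. f k + inverse (real (Suc n))) \<longlonglongrightarrow> f k + 0"
      by (intro tendsto_intros LIMSEQ_inverse_real_of_nat)
    moreover have "\<forall>n\<ge>0. f (kk n) \<le> f k + inverse (real (Suc n))"
      using kk(2) low[OF that] by (smt (verit))
    ultimately show ?thesis using LIMSEQ_le by fastforce
  qed
  then show ?thesis using qK unfolding f_def by blast
qed

lemma separation:
  fixes K :: "'a::{real_inner,complete_space} set"
  assumes cl: "closed K" and cv: "convex K" and pK: "p \<notin> K"
  shows "\<exists>u. \<forall>k\<in>K. (k - p) \<bullet> u > 0"
proof (cases "K = {}")
  case True then show ?thesis by auto
next
  case False
  then obtain q where qK: "q \<in> K" and q: "\<And>k. k \<in> K \<Longrightarrow> norm (p - q)^2 \<le> norm (p - k)^2"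
    using nearest_point[OF cl cv] by blast
  have var: "(p - q) \<bullet> (k - q) \<le> 0" if kK: "k \<in> K" for k
  proof (rule ccontr)
    define c where "c = (p - q) \<bullet> (k - q)"
    define s where "s = norm (k - q)^2"
    assume "\<not> (p - q) \<bullet> (k - q) \<le> 0"
    then have c: "c > 0" unfolding c_def by simp
    have "k \<noteq> q" using c unfolding c_def by auto
    then have s: "s > 0" unfolding s_def by simp
    define t where "t = c / (s + c)"
    have t0: "t > 0" and t1: "t < 1" using c s unfolding t_def by (auto simp: field_simps)
    have "q + t *\<^sub>R (k - q) = (1 - t) *\<^sub>R q + t *\<^sub>R k" by (simp add: algebra_simps)
    also have "\<dots> \<in> K" using cv qK kK t0 t1 unfolding convex_def by auto
    finally have "norm (p - q)^2 \<le> norm (p - (q + t *\<^sub>R (k - q)))^2" using q by blast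
    also have "p - (q + t *\<^sub>R (k - q)) = (p - q) - t *\<^sub>R (k - q)" by simp
    finally have "norm (p - q)^2 \<le> norm (p - q)^2 - 2 * t * c + t^2 * s"
      unfolding norm_expand c_def s_def .
    then have "2 * t * c \<le> t * (t * s)" by (simp add: power2_eq_square algebra_simps)
    then have "2 * c \<le> t * s" using t0 by simp
    moreover have "t * s < c"
    proof -
      have "t * s = c * s / (s + c)" unfolding t_def by simp
      also have "\<dots> < c" using c s by (simp add: field_simps)
      finally show ?thesis .
    qed
    ultimately show False using c by linarith
  qed
  have "p \<noteq> q" using pK qK by auto
  then have pos: "(q - p) \<bullet> (q - p) > 0" by simp
  show ?thesis
  proof (intro exI ballI)
    fix k assume "k \<in> K"
    have "(k - p) \<bullet> (q - p) = - ((p - q) \<bullet> (k - q)) + (q - p) \<bullet> (q - p)"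
      by (simp add: inner_diff_left inner_diff_right inner_commute algebra_simps)
    then show "(k - p) \<bullet> (q - p) > 0" using var[OF \<open>k \<in> K\<close>] pos by linarith
  qed
qed

lemma orth_proj_prj:
  fixes C :: "'a::real_inner set"
  assumes S: "pairwise orthogonal C" and fin: "finite C"
  shows "orth_proj (span C) x = prj C x"
  unfolding orth_proj_def
proof (rule the_equality)
  show "prj C x \<in> span C \<and> x - prj C x \<in> orthogonal_comp (span C)"
    using prj_in_span prj_orth[OF S fin] unfolding orthogonal_comp_def by blast
next
  fix y assume y: "y \<in> span C \<and> x - y \<in> orthogonal_comp (span C)"
  have "y - prj C x \<in> span C" using y prj_in_span span_diff by blast
  moreover have "y - prj C x = (x - prj C x) - (x - y)" by simp
  ultimately have "orthogonal (y - prj C x) (y - prj C x)"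
    using y prj_orth[OF S fin] unfolding orthogonal_comp_def
    by (metis (no_types, lifting) mem_Collect_eq orthogonal_clauses(5))
  then show "y = prj C x" by (simp add: orthogonal_self)
qed

lemma prj_zero:
  assumes "x \<in> orthogonal_comp (span C)"
  shows "prj C x = 0"
proof -
  have "\<And>b. b \<in> C \<Longrightarrow> b \<bullet> x = 0"
    using assms span_base unfolding orthogonal_comp_def orthogonal_def by blast
  then show ?thesis unfolding prj_def by simp
qed

lemma increment:
  fixes C :: "'a::real_inner set"
  assumes S: "pairwise orthogonal C" and fin: "finite C" and sub: "span C \<subseteq> span B"
  shows "span B \<inter> orthogonal_comp (span C) = span ((\<lambda>x. x - prj C x) ` B)"
proof -
  have lin: "linear (\<lambda>x. x - prj C x)"
  proof (rule linearI)
    fix x y show "(x + y) - prj C (x + y) = (x - prj C x) + (y - prj C y)"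
      using linear_add[OF prj_linear[of C], of x y] by simp
  next
    fix c :: real and x show "c *\<^sub>R x - prj C (c *\<^sub>R x) = c *\<^sub>R (x - prj C x)"
      using linear_scale[OF prj_linear[of C], of c x] by (simp add: scaleR_diff_right)
  qed
  have "span ((\<lambda>x. x - prj C x) ` B) = (\<lambda>x. x - prj C x) ` span B"
    using lin by (rule span_linear_image)
  also have "\<dots> = span B \<inter> orthogonal_comp (span C)"
  proof (intro equalityI subsetI)
    fix z assume "z \<in> (\<lambda>x. x - prj C x) ` span B"
    then obtain x where x: "x \<in> span B" "z = x - prj C x" by blast
    have "prj C x \<in> span B" using prj_in_span sub by blast
    then have "z \<in> span B" using x span_diff by blast
    moreover have "z \<in> orthogonal_comp (span C)"
      using prj_orth[OF S fin] x(2) unfolding orthogonal_comp_def by blast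
    ultimately show "z \<in> span B \<inter> orthogonal_comp (span C)" by blast
  next
    fix z assume z: "z \<in> span B \<inter> orthogonal_comp (span C)"
    then have "z = z - prj C z" using prj_zero[of z C] by simp
    then show "z \<in> (\<lambda>x. x - prj C x) ` span B" using z by blast
  qed
  finally show ?thesis by simp
qed

theorem proposition3p3:
  fixes N :: "'a::{real_inner, complete_space} \<Rightarrow> real"
    and K :: "'a set" and p :: 'a
  assumes "separable_space (euclidean :: 'a topology)"
    and "\<not> (\<exists>B::'a set. finite B \<and> span B = UNIV)"
    and "measurable_norm N"
    and "closed K" and "convex K" and "p \<notin> K"
  shows "\<exists>F :: nat \<Rightarrow> 'a set. measurably_adapted N F \<and>
           (\<forall>n\<ge>1. fin_dim_subspace (F n)) \<and> p \<in> F 1 \<and>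
           (\<forall>n\<ge>1. ((\<lambda>x. p + x) ` orthogonal_comp (F n)) \<inter> K = {}) \<and>
           (\<forall>n\<ge>1. p \<notin> orth_proj (F n) ` K)"
proof -
  obtain u where u: "\<And>k. k \<in> K \<Longrightarrow> (k - p) \<bullet> u > 0"
    using separation[OF assms(4,5,6)] by blast
  have "\<forall>n. \<exists>B. finite B \<and> (\<forall>F1. fin_dim_subspace F1 \<and> F1 \<subseteq> orthogonal_comp (span B) \<longrightarrow>
           gauss F1 (\<lambda>v. N v > (1/2)^n) < (1/2)^n)"
  proof
    fix n :: nat
    have "(1/2::real)^n > 0" by simp
    then obtain F0 where "fin_dim_subspace F0" and F0: "\<forall>F1. fin_dim_subspace F1 \<and> F1 \<subseteq> orthogonal_comp F0 \<longrightarrow>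
           gauss F1 (\<lambda>v. N v > (1/2)^n) < (1/2)^n"
      using assms(3) unfolding measurable_norm_def by blast
    then obtain B where "finite B" "span B = F0" unfolding fin_dim_subspace_def by blast
    then show "\<exists>B. finite B \<and> (\<forall>F1. fin_dim_subspace F1 \<and> F1 \<subseteq> orthogonal_comp (span B) \<longrightarrow>
           gauss F1 (\<lambda>v. N v > (1/2)^n) < (1/2)^n)" using F0 by blast
  qed
  then obtain B0 where B0fin: "\<And>n. finite (B0 n)" and B0: "\<And>n F1. fin_dim_subspace F1 \<Longrightarrow>
      F1 \<subseteq> orthogonal_comp (span (B0 n)) \<Longrightarrow> gauss F1 (\<lambda>v. N v > (1/2)^n) < (1/2)^n"
    by metis
  obtain D :: "'a set" where D: "countable D" "closure D = UNIV"
    using assms(1) unfolding separable_space_def by auto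
  have "D \<noteq> {}" using D(2) by auto
  define e where "e = from_nat_into D"
  have rangee: "range e = D" unfolding e_def using D(1) \<open>D \<noteq> {}\<close> by simp
  define nv where "nv B = (SOME v. v \<notin> span B)" for B :: "'a set"
  have nv: "nv B \<notin> span B" if "finite B" for B
  proof -
    have "span B \<noteq> UNIV" using assms(2) that by blast
    then have "\<exists>v. v \<notin> span B" by blast
    then show ?thesis unfolding nv_def by (rule someI_ex)
  qed
  define S where "S = rec_nat {} (\<lambda>n X. X \<union> ({p, u, e n, nv X} \<union> B0 (Suc n)))"
  have S0: "S 0 = {}" and SS: "\<And>n. S (Suc n) = S n \<union> ({p, u, e n, nv (S n)} \<union> B0 (Suc n))"
    unfolding S_def by simp_all
  have Sfin: "finite (S n)" for n
    by (induction n) (simp_all add: S0 SS B0fin)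
  have "\<forall>n. \<exists>C. finite C \<and> pairwise orthogonal C \<and> span C = span (S n)"
    using basis_orthogonal Sfin by blast
  then obtain C where Cfin: "\<And>n. finite (C n)" and Corth: "\<And>n. pairwise orthogonal (C n)"
    and Cspan: "\<And>n. span (C n) = span (S n)" by metis
  define F where "F n = span (S n)" for n
  have Fmono: "F n \<subseteq> F (Suc n)" for n unfolding F_def SS by (rule span_mono) blast
  have inS4: "p \<in> F (Suc n)" "u \<in> F (Suc n)" "e n \<in> F (Suc n)" "nv (S n) \<in> F (Suc n)" for n
    unfolding F_def SS by (auto intro: span_base)
  have inS5: "span (B0 (Suc n)) \<subseteq> F (Suc n)" for n
    unfolding F_def SS by (intro span_mono) auto
  note inS = inS4 inS5
  have nvF: "nv (S n) \<notin> F n" for n unfolding F_def using nv[OF Sfin] .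
  have ge1: "\<exists>m. n = Suc m" if "n \<ge> 1" for n :: nat using that by presburger
  have pu: "p \<in> F n" "u \<in> F n" if "n \<ge> 1" for n using ge1[OF that] inS by auto
  have B0F: "span (B0 n) \<subseteq> F n" if "n \<ge> 1" for n using ge1[OF that] inS5 by blast
  have FC: "F n = span (C n)" for n unfolding F_def Cspan ..
  define G where "G n = F (Suc n) \<inter> orthogonal_comp (F n)" for n
  have Geq: "G n = span ((\<lambda>x. x - prj (C n) x) ` S (Suc n))" for n
    unfolding G_def FC using increment[OF Corth Cfin, of n "S (Suc n)"] Fmono[of n]
    unfolding FC F_def by (simp add: Cspan)
  have Gfin: "fin_dim_subspace (G n)" for n
    unfolding fin_dim_subspace_def Geq using Sfin by blast
  have Gnz: "G n \<noteq> {0}" for n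
  proof
    assume G0: "G n = {0}"
    let ?v = "nv (S n)"
    have "?v - prj (C n) ?v \<in> F (Suc n)"
      using inS(4)[of n] prj_in_span[of "C n" ?v] Fmono[of n] FC span_diff
      by (metis F_def subsetD subspace_span subspace_diff)
    moreover have "?v - prj (C n) ?v \<in> orthogonal_comp (F n)"
      using prj_orth[OF Corth Cfin] unfolding FC orthogonal_comp_def by blast
    ultimately have "?v - prj (C n) ?v = 0" using G0 unfolding G_def by blast
    then have "?v \<in> F n" using prj_in_span[of "C n" ?v] FC by simp
    then show False using nvF by blast
  qed
  have adapted: "measurably_adapted N F"
    unfolding measurably_adapted_def
  proof (intro conjI allI impI)
    fix n :: nat
    show "subspace (F n)" unfolding F_def by (rule subspace_span)
    show "closed (F n)" unfolding FC by (rule span_closed[OF Corth Cfin])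
    show "F n \<subseteq> F (Suc n)" by (rule Fmono)
    show "F (Suc n) \<inter> orthogonal_comp (F n) \<noteq> {0}" using Gnz unfolding G_def .
    show "fin_dim_subspace (F (Suc n) \<inter> orthogonal_comp (F n))" using Gfin unfolding G_def .
    assume "n \<ge> 1"
    show "gauss (F (Suc n) \<inter> orthogonal_comp (F n)) (\<lambda>v. N v > (1/2)^n) < (1/2)^n"
    proof (rule B0)
      show "fin_dim_subspace (F (Suc n) \<inter> orthogonal_comp (F n))" using Gfin unfolding G_def .
      have "orthogonal_comp (F n) \<subseteq> orthogonal_comp (span (B0 n))"
        by (rule orthogonal_comp_anti_mono[OF B0F[OF \<open>n \<ge> 1\<close>]])
      then show "F (Suc n) \<inter> orthogonal_comp (F n) \<subseteq> orthogonal_comp (span (B0 n))" by blast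
    qed
  next
    have "range e \<subseteq> (\<Union>n\<in>{1..}. F n)" using inS(3) by fastforce
    then have "closure D \<subseteq> closure (\<Union>n\<in>{1..}. F n)" using rangee closure_mono by blast
    then show "closure (\<Union>n\<in>{1..}. F n) = UNIV" using D(2) by blast
  qed
  have contra: "False" if "k \<in> K" "k - p \<in> orthogonal_comp (F n)" "n \<ge> 1" for k n
  proof -
    have "orthogonal u (k - p)" using that(2) pu(2)[OF that(3)] unfolding orthogonal_comp_def by blast
    then have "(k - p) \<bullet> u = 0" by (simp add: orthogonal_def inner_commute)
    then show False using u[OF that(1)] by simp
  qed
  show ?thesis
  proof (intro exI conjI allI impI)
    show "measurably_adapted N F" by (rule adapted)
    fix n :: nat
    show "fin_dim_subspace (F n)" unfolding F_def fin_dim_subspace_def using Sfin by blast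
  next
    show "p \<in> F 1" using pu by simp
  next
    fix n :: nat assume n: "n \<ge> 1"
    show "(\<lambda>x. p + x) ` orthogonal_comp (F n) \<inter> K = {}"
    proof (rule ccontr)
      assume "(\<lambda>x. p + x) ` orthogonal_comp (F n) \<inter> K \<noteq> {}"
      then obtain x where "x \<in> orthogonal_comp (F n)" "p + x \<in> K" by blast
      then show False using contra[of "p + x" n] n by simp
    qed
  next
    fix n :: nat assume n: "n \<ge> 1"
    show "p \<notin> orth_proj (F n) ` K"
    proof
      assume "p \<in> orth_proj (F n) ` K"
      then obtain k where k: "k \<in> K" "p = orth_proj (F n) k" by blast
      then have "p = prj (C n) k" unfolding FC using orth_proj_prj[OF Corth Cfin] by simp
      then have "k - p \<in> orthogonal_comp (F n)"
        using prj_orth[OF Corth Cfin] unfolding FC orthogonal_comp_def by blast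
      then show False using contra k n by blast
    qed
  qed
qed

end
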